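(* Let $X$ be a path-connected topological space, $Y\subset X$, $G$ a group, and $\mathcal{U}$ an open covering of $X$. Then the restriction map $Z^1(X,Y)\to Z^1_{\mathcal{U}}(X,Y)$ (restricting a cocycle from $P(X)$ to the set $P_{\mathcal{U}}(X)$ of short paths) is a bijection, and the induced map $H^1(X,Y)\to H^1_{\mathcal{U}}(X,Y)$ is a bijection.
   Context: Conventions: $I=[0,1]$; a path in $W$ is a continuous map $I\to W$; $P(W)$ is the set of all paths. For $p(1)=q(0)$, $p\cdot q$ is concatenation. Homotopies of paths are relative to $\{0,1\}$; $p\sim q$ means homotopic. $G$ has unit $1$. A $0$-cochain of $(X,Y)$ is a map $c\colon X\to G$ with $c|_Y=1$; they form a group $C^0(X,Y)$ under pointwise multiplication. A $1$-cochain is a map $u\colon P(X)\to G$ with $u(p)=1$ for paths $p$ with image in $Y$; a cocycle additionally satisfies $u(p)=u(q)$ if $p\sim q$ and $u(p\cdot q)=u(p)u(q)$ when $p\cdot q$ is defined; $Z^1(X,Y)$ is the set of cocycles; $C^0(X,Y)$ acts by $(c\bullet u)(p)=c(p(0))u(p)c(p(1))^{-1}$, and $H^1(X,Y)$ is the orbit set. Short versions: a path $p$ is short if $p(I)\subset U$ for some $U\in\mathcal{U}$; a homotopy $I\times[0,1]\to X$ is short if its image lies in some $U\in\mathcal{U}$. $P_{\mathcal{U}}(X)$ is the set of short paths. A short $1$-cochain is a map $u\colon P_{\mathcal{U}}(X)\to G$ with $u(p)=1$ for short paths $p$ with image in $Y$. It is a short cocycle if $u(p)=u(q)$ whenever there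 is a short homotopy relative to $\{0,1\}$ between $p$ and $q$, and $u(p\cdot q)=u(p)u(q)$ whenever $p\cdot q$ is defined and short. $Z^1_{\mathcal{U}}(X,Y)$ is the set of short cocycles; $C^0(X,Y)$ acts on it by the same formula, and $H^1_{\mathcal{U}}(X,Y)$ is the set of orbits. *)

theory Defs
  imports "HOL-Analysis.Analysis" "HOL-Algebra.Group"
begin

definition paths_of :: "'a topology \<Rightarrow> (real \<Rightarrow> 'a) set" where
  "paths_of X = {p. pathin X p}"

text \<open>Concatenation of paths (same formula as the library's joinpaths, without type class).\<close>
definition pjoin :: "(real \<Rightarrow> 'a) \<Rightarrow> (real \<Rightarrow> 'a) \<Rightarrow> real \<Rightarrow> 'a" where
  "pjoin p q = (\<lambda>t. if t \<le> 1/2 then p (2 * t) else q (2 * t - 1))"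

definition phomotopic :: "'a topology \<Rightarrow> (real \<Rightarrow> 'a) \<Rightarrow> (real \<Rightarrow> 'a) \<Rightarrow> bool" where
  "phomotopic X p q =
     homotopic_with (\<lambda>r. r 0 = p 0 \<and> r 1 = p 1) (top_of_set {0..1}) X p q"

definition short_paths :: "'a topology \<Rightarrow> 'a set set \<Rightarrow> (real \<Rightarrow> 'a) set" where
  "short_paths X \<U> = {p. pathin X p \<and> (\<exists>U\<in>\<U>. p ` {0..1} \<subseteq> U)}"

definition short_homotopic :: "'a topology \<Rightarrow> 'a set set \<Rightarrow> (real \<Rightarrow> 'a) \<Rightarrow> (real \<Rightarrow> 'a) \<Rightarrow> bool" where
  "short_homotopic X \<U> p q =
     (\<exists>U\<in>\<U>. homotopic_with (\<lambda>r. r 0 = p 0 \<and> r 1 = p 1) (top_of_set {0..1}) (subtopology X U) p q)"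

definition cochains0 :: "'a topology \<Rightarrow> 'a set \<Rightarrow> ('g, 'b) monoid_scheme \<Rightarrow> ('a \<Rightarrow> 'g) set" where
  "cochains0 X Y G = {c. c \<in> extensional (topspace X) \<and> (\<forall>x\<in>topspace X. c x \<in> carrier G)
                         \<and> (\<forall>y\<in>Y. c y = \<one>\<^bsub>G\<^esub>)}"

definition cocycles1 :: "'a topology \<Rightarrow> 'a set \<Rightarrow> ('g, 'b) monoid_scheme \<Rightarrow> ((real \<Rightarrow> 'a) \<Rightarrow> 'g) set" where
  "cocycles1 X Y G = {u. u \<in> extensional (paths_of X)
      \<and> (\<forall>p\<in>paths_of X. u p \<in> carrier G)
      \<and> (\<forall>p\<in>paths_of X. p ` {0..1} \<subseteq> Y \<longrightarrow> u p = \<one>\<^bsub>G\<^esub>)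
      \<and> (\<forall>p\<in>paths_of X. \<forall>q\<in>paths_of X. phomotopic X p q \<longrightarrow> u p = u q)
      \<and> (\<forall>p\<in>paths_of X. \<forall>q\<in>paths_of X. p 1 = q 0 \<longrightarrow> u (pjoin p q) = u p \<otimes>\<^bsub>G\<^esub> u q)}"

definition short_cocycles1 :: "'a topology \<Rightarrow> 'a set set \<Rightarrow> 'a set \<Rightarrow> ('g, 'b) monoid_scheme \<Rightarrow> ((real \<Rightarrow> 'a) \<Rightarrow> 'g) set" where
  "short_cocycles1 X \<U> Y G = {u. u \<in> extensional (short_paths X \<U>)
      \<and> (\<forall>p\<in>short_paths X \<U>. u p \<in> carrier G)
      \<and> (\<forall>p\<in>short_paths X \<U>. p ` {0..1} \<subseteq> Y \<longrightarrow> u p = \<one>\<^bsub>G\<^esub>)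
      \<and> (\<forall>p\<in>short_paths X \<U>. \<forall>q\<in>short_paths X \<U>. short_homotopic X \<U> p q \<longrightarrow> u p = u q)
      \<and> (\<forall>p\<in>short_paths X \<U>. \<forall>q\<in>short_paths X \<U>. p 1 = q 0 \<longrightarrow> pjoin p q \<in> short_paths X \<U>
            \<longrightarrow> u (pjoin p q) = u p \<otimes>\<^bsub>G\<^esub> u q)}"

definition cochain_act :: "('g, 'b) monoid_scheme \<Rightarrow> (real \<Rightarrow> 'a) set \<Rightarrow> ('a \<Rightarrow> 'g) \<Rightarrow> ((real \<Rightarrow> 'a) \<Rightarrow> 'g)
     \<Rightarrow> ((real \<Rightarrow> 'a) \<Rightarrow> 'g)" where
  "cochain_act G P c u = (\<lambda>p\<in>P. c (p 0) \<otimes>\<^bsub>G\<^esub> u p \<otimes>\<^bsub>G\<^esub> inv\<^bsub>G\<^esub> (c (p 1)))"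

definition H1 :: "'a topology \<Rightarrow> 'a set \<Rightarrow> ('g, 'b) monoid_scheme \<Rightarrow> ((real \<Rightarrow> 'a) \<Rightarrow> 'g) set set" where
  "H1 X Y G = {{cochain_act G (paths_of X) c u | c. c \<in> cochains0 X Y G} | u. u \<in> cocycles1 X Y G}"

definition short_H1 :: "'a topology \<Rightarrow> 'a set set \<Rightarrow> 'a set \<Rightarrow> ('g, 'b) monoid_scheme \<Rightarrow> ((real \<Rightarrow> 'a) \<Rightarrow> 'g) set set" where
  "short_H1 X \<U> Y G = {{cochain_act G (short_paths X \<U>) c u | c. c \<in> cochains0 X Y G} | u. u \<in> short_cocycles1 X \<U> Y G}"

definition restrict_short :: "'a topology \<Rightarrow> 'a set set \<Rightarrow> ((real \<Rightarrow> 'a) \<Rightarrow> 'g) \<Rightarrow> ((real \<Rightarrow> 'a) \<Rightarrow> 'g)" where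
  "restrict_short X \<U> u = restrict u (short_paths X \<U>)"

end

theory Submission
  imports Defs
begin

definition sub :: "(real \<Rightarrow> 'a) \<Rightarrow> real \<Rightarrow> real \<Rightarrow> real \<Rightarrow> 'a" where
  "sub p a b = (\<lambda>t. p (a + (b - a) * t))"

lemma sub_comp: "sub p a b = p \<circ> (\<lambda>t. a + (b - a) * t)"
  by (simp add: sub_def o_def)

lemma aff_in:
  fixes a b t lo hi :: real
  assumes "a \<in> {lo..hi}" "b \<in> {lo..hi}" "t \<in> {0..1}"
  shows "a + (b - a) * t \<in> {lo..hi}"
proof -
  have e: "a + (b - a) * t = (1 - t) * a + t * b" by (simp add: algebra_simps)
  have "(1-t)*lo + t*lo \<le> (1 - t) * a + t * b" using assms by (intro add_mono mult_left_mono) auto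
  moreover have "(1 - t) * a + t * b \<le> (1-t)*hi + t*hi" using assms by (intro add_mono mult_left_mono) auto
  ultimately show ?thesis unfolding e by (auto simp: algebra_simps)
qed

lemma aff_in_ab:
  fixes a b t :: real
  assumes "a \<le> b" "t \<in> {0..1}"
  shows "a + (b - a) * t \<in> {a..b}"
  using aff_in[of a a b b t] assms by auto

lemma pathin_comp:
  assumes "continuous_map (top_of_set S) X h" "continuous_on {0..1} g" "g ` {0..1} \<subseteq> S"
  shows "pathin X (h \<circ> g)"
  unfolding pathin_def
  by (rule continuous_map_compose[OF _ assms(1)]) (use assms in \<open>auto simp: image_subset_iff\<close>)

lemma pathin_sub:
  assumes "pathin X p" "a \<in> {0..1}" "b \<in> {0..1}"
  shows "pathin X (sub p a b)"
  unfolding sub_comp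
proof (rule pathin_comp[of "{0..1}"])
  show "continuous_map (top_of_set {0..1}) X p" using assms(1) by (simp add: pathin_def)
  show "continuous_on {0..1} (\<lambda>t. a + (b - a) * t)" by (intro continuous_intros)
  show "(\<lambda>t. a + (b - a) * t) ` {0..1} \<subseteq> {0..1}" by (intro image_subsetI aff_in) (use assms in auto)
qed

lemma sub_image:
  assumes "a \<le> b"
  shows "sub p a b ` {0..1} \<subseteq> p ` {a..b}"
  using aff_in_ab[OF assms] by (auto simp: sub_def)

lemma sub01 [simp]: "sub p 0 1 = p"
  by (simp add: sub_def)

lemma sub_const: "sub p a a = (\<lambda>t. p a)"
  by (simp add: sub_def)

lemma pjoin_comp: "pjoin (h \<circ> g1) (h \<circ> g2) = h \<circ> (g1 +++ g2)"
  by (auto simp: pjoin_def joinpaths_def fun_eq_iff)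

lemma pathin_pjoin:
  assumes "pathin X g1" "pathin X g2" "g1 1 = g2 0"
  shows "pathin X (pjoin g1 g2)"
proof -
  let ?T01 = "top_of_set {0..1::real}"
  have g1: "continuous_map ?T01 X g1" and g2: "continuous_map ?T01 X g2"
    using assms unfolding pathin_def by auto
  let ?g = "\<lambda>x. if x \<le> 1/2 then (g1 \<circ> (\<lambda>t. 2 * t)) x else (g2 \<circ> (\<lambda>t. 2 * t -1)) x"
  have "continuous_map (subtopology euclideanreal {0..1}) X ?g"
  proof (intro continuous_map_cases_le continuous_map_compose, force, force)
    show "continuous_map (subtopology ?T01 {x \<in> topspace ?T01. x \<le> 1/2}) ?T01 ((*) 2)"
      by (auto simp: continuous_map_in_subtopology continuous_map_from_subtopology)
    have "continuous_map
           (subtopology (top_of_set {0..1}) {x. 0 \<le> x \<and> x \<le> 1 \<and> 1 \<le> x * 2})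
           euclideanreal (\<lambda>t. 2 * t - 1)"
      by (intro continuous_intros) (force intro: continuous_map_from_subtopology)
    then show "continuous_map (subtopology ?T01 {x \<in> topspace ?T01. 1/2 \<le> x}) ?T01 (\<lambda>t. 2 * t - 1)"
      by (force simp: continuous_map_in_subtopology)
  qed (use assms(3) in \<open>auto simp: g1 g2 mult.commute\<close>)
  moreover have "?g = pjoin g1 g2" by (auto simp: pjoin_def fun_eq_iff)
  ultimately show ?thesis unfolding pathin_def by simp
qed

lemma pjoin_0 [simp]: "pjoin p q 0 = p 0" and pjoin_1 [simp]: "pjoin p q 1 = q 1"
  by (auto simp: pjoin_def)

lemma convex_homotopic:
  fixes g1 g2 :: "real \<Rightarrow> 'v::real_normed_vector"
  assumes H: "continuous_map (top_of_set S) X H" and cvx: "convex S" and HU: "H ` S \<subseteq> U"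
    and g1: "continuous_on {0..1} g1" "g1 ` {0..1} \<subseteq> S"
    and g2: "continuous_on {0..1} g2" "g2 ` {0..1} \<subseteq> S"
    and e0: "g1 0 = g2 0" and e1: "g1 1 = g2 1"
  shows "homotopic_with (\<lambda>r. r 0 = (H \<circ> g1) 0 \<and> r 1 = (H \<circ> g1) 1) (top_of_set {0..1})
           (subtopology X U) (H \<circ> g1) (H \<circ> g2)"
proof -
  define k where "k = (\<lambda>z::real\<times>real. (1 - fst z) *\<^sub>R g1 (snd z) + fst z *\<^sub>R g2 (snd z))"
  have kS: "k z \<in> S" if "z \<in> {0..1} \<times> {0..1}" for z
    unfolding k_def using that g1 g2 by (intro convexD[OF cvx]) auto
  have "continuous_on ({0..1}\<times>{0..1}) k"
    unfolding k_def
    by (intro continuous_intros continuous_on_compose2[OF g1(1)] continuous_on_compose2[OF g2(1)]) auto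
  then have ck: "continuous_map (top_of_set ({0..1}\<times>{0..1})) (top_of_set S) k"
    using kS by auto
  have "continuous_map (top_of_set ({0..1}\<times>{0..1})) X (H \<circ> k)"
    by (rule continuous_map_compose[OF ck H])
  moreover have "(H \<circ> k) z \<in> U" if "z \<in> {0..1} \<times> {0..1}" for z
    using kS[OF that] HU by auto
  ultimately have cont: "continuous_map (prod_topology (top_of_set {0..1}) (top_of_set {0..1})) (subtopology X U) (H \<circ> k)"
    by (auto simp: continuous_map_in_subtopology)
  have e0': "(H \<circ> k) (t, 0) = (H \<circ> g1) 0" and e1': "(H \<circ> k) (t, 1) = (H \<circ> g1) 1" for t
    by (simp_all add: k_def e0 e1)
  have "(H \<circ> k) (0, x) = (H \<circ> g1) x" "(H \<circ> k) (1, x) = (H \<circ> g2) x" for x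
    by (auto simp: k_def)
  note ee = this
  show ?thesis
    unfolding homotopic_with_def
    apply (rule exI[where x="H \<circ> k"])
    apply (intro conjI allI ballI)
    apply (rule cont)
    apply (rule ee(1))
    apply (rule ee(2))
    apply (rule e0')
    apply (rule e1')
    done
qed

lemma diam_rect:
  fixes s1 s2 a b :: real
  assumes "T \<subseteq> {s1..s2} \<times> {a..b}" "s1 \<le> s2" "a \<le> b"
  shows "diameter T \<le> (s2 - s1) + (b - a)"
proof (rule diameter_le)
  show "T \<noteq> {} \<or> 0 \<le> s2 - s1 + (b - a)" using assms by auto
  fix x y assume "x \<in> T" "y \<in> T"
  moreover obtain x1 x2 y1 y2 where xy0: "x = (x1,x2)" "y = (y1,y2)" by (cases x, cases y) auto
  ultimately have xy: "x = (x1,x2)" "y = (y1,y2)" "x1 \<in> {s1..s2}" "y1 \<in> {s1..s2}"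
    "x2 \<in> {a..b}" "y2 \<in> {a..b}" using assms(1) by auto
  have "norm (x - y) = sqrt ((norm (x1-y1))\<^sup>2 + (norm (x2 - y2))\<^sup>2)" by (simp add: xy norm_Pair)
  also have "\<dots> \<le> \<bar>norm (x1-y1)\<bar> + \<bar>norm (x2-y2)\<bar>" by (rule sqrt_sum_squares_le_sum_abs)
  also have "\<dots> \<le> (s2 - s1) + (b - a)" using xy by auto
  finally show "norm (x - y) \<le> (s2 - s1) + (b - a)" .
qed

lemma pathin_top: "pathin X p \<Longrightarrow> t \<in> {0..1} \<Longrightarrow> p t \<in> topspace X"
  unfolding pathin_def by (metis continuous_map_image_subset_topspace image_subset_iff topspace_euclidean_subtopology)

lemma pathin_0: "pathin X p \<Longrightarrow> p 0 \<in> topspace X" by (rule pathin_top) auto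
lemma pathin_1: "pathin X p \<Longrightarrow> p 1 \<in> topspace X" by (rule pathin_top) auto

lemma pq_left: "y \<le> 1/2 \<Longrightarrow> pjoin p q y = p (2 * y)"
  by (simp add: pjoin_def)

lemma pq_right: assumes "p 1 = q 0" "1/2 \<le> y" shows "pjoin p q y = q (2 * y - 1)"
proof (cases "y = 1/2")
  case True
  then have y: "y \<le> 1/2" "2*y = 1" "2*y - 1 = 0" by simp_all
  have "pjoin p q y = p (2*y)" using y(1) by (simp add: pjoin_def)
  also have "\<dots> = q (2*y - 1)" unfolding y(2,3) using assms(1) by simp
  finally show ?thesis .
qed (use assms in \<open>simp add: pjoin_def\<close>)

locale SC0 =
  fixes X :: "'a topology" and UU :: "'a set set"
  assumes opn: "\<And>U. U \<in> UU \<Longrightarrow> openin X U" and cov: "\<Union>UU = topspace X"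
begin

lemma short_pathsI: "pathin X p \<Longrightarrow> U \<in> UU \<Longrightarrow> p ` {0..1} \<subseteq> U \<Longrightarrow> p \<in> short_paths X UU"
  by (auto simp: short_paths_def)

lemma short_pathin: "p \<in> short_paths X UU \<Longrightarrow> pathin X p"
  by (auto simp: short_paths_def)

lemma short_comp:
  assumes "continuous_map (top_of_set S) X h" "continuous_on {0..1} g" "g ` {0..1} \<subseteq> T" "T \<subseteq> S"
    "U \<in> UU" "h ` T \<subseteq> U"
  shows "h \<circ> g \<in> short_paths X UU"
proof (rule short_pathsI[OF pathin_comp[OF assms(1,2)] assms(5)])
  show "g ` {0..1} \<subseteq> S" using assms(3,4) by auto
  show "(h \<circ> g) ` {0..1} \<subseteq> U" using assms(3,6) by (auto simp: image_subset_iff)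
qed

lemma const_short: "x \<in> topspace X \<Longrightarrow> (\<lambda>t. x) \<in> short_paths X UU"
  using cov by (auto simp: short_paths_def)

lemma sub_short:
  assumes "pathin X p" "0 \<le> a" "a \<le> b" "b \<le> 1" "U \<in> UU" "p ` {a..b} \<subseteq> U"
  shows "sub p a b \<in> short_paths X UU"
proof -
  have "pathin X (sub p a b)" using assms by (intro pathin_sub) auto
  then show ?thesis using assms sub_image[of a b p] by (intro short_pathsI[of _ U]) auto
qed

lemma lebesgue:
  fixes S :: "'v::metric_space set"
  assumes "compact S" "S \<noteq> {}" and f: "continuous_map (top_of_set S) X f"
  obtains d where "d > 0" "\<And>T. T \<subseteq> S \<Longrightarrow> diameter T < d \<Longrightarrow> \<exists>U\<in>UU. f ` T \<subseteq> U"
proof -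
  define C where "C = {V. open V \<and> (\<exists>U\<in>UU. S \<inter> V \<subseteq> f -` U)}"
  have cov': "S \<subseteq> \<Union>C"
  proof
    fix x assume x: "x \<in> S"
    then have "f x \<in> topspace X" using continuous_map_image_subset_topspace[OF f] by fastforce
    then obtain U where U: "U \<in> UU" "f x \<in> U" using cov by auto
    have "openin (top_of_set S) {y \<in> topspace (top_of_set S). f y \<in> U}"
      using openin_continuous_map_preimage[OF f opn[OF U(1)]] .
    then obtain V where V: "open V" "{y \<in> S. f y \<in> U} = S \<inter> V" by (auto simp: openin_open)
    then have "V \<in> C" "x \<in> V" using x U unfolding C_def by blast+
    then show "x \<in> \<Union>C" by blast
  qed
  moreover have "C \<noteq> {}" using cov' assms(2) by auto
  moreover have "\<And>B. B \<in> C \<Longrightarrow> open B" by (simp add: C_def)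
  ultimately obtain d where d: "0 < d" "\<And>T. T \<subseteq> S \<Longrightarrow> diameter T < d \<Longrightarrow> \<exists>B\<in>C. T \<subseteq> B"
    using Lebesgue_number_lemma[OF assms(1)] by metis
  show thesis
  proof (rule that[OF d(1)])
    fix T assume T: "T \<subseteq> S" "diameter T < d"
    then obtain B where "B \<in> C" "T \<subseteq> B" using d(2) by blast
    then obtain U where "U \<in> UU" "S \<inter> B \<subseteq> f -` U" unfolding C_def by blast
    then show "\<exists>U\<in>UU. f ` T \<subseteq> U" using T \<open>T \<subseteq> B\<close> by blast
  qed
qed

lemma path_leb:
  assumes "pathin X p"
  obtains d where "d > 0" "\<And>a b. 0 \<le> a \<Longrightarrow> a \<le> b \<Longrightarrow> b \<le> 1 \<Longrightarrow> b - a < d \<Longrightarrow> \<exists>U\<in>UU. p ` {a..b} \<subseteq> U"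
proof -
  obtain d where d: "d > 0" "\<And>T. T \<subseteq> {0..1} \<Longrightarrow> diameter T < d \<Longrightarrow> \<exists>U\<in>UU. p ` T \<subseteq> U"
    using lebesgue[of "{0..1::real}" p] assms by (auto simp: pathin_def)
  show thesis
  proof (rule that[OF d(1)])
    fix a b :: real assume "0 \<le> a" "a \<le> b" "b \<le> 1" "b - a < d"
    then show "\<exists>U\<in>UU. p ` {a..b} \<subseteq> U" by (intro d(2)) auto
  qed
qed

end

locale SC = SC0 +
  fixes Y :: "'a set" and G :: "('g, 'b) monoid_scheme" and w
  assumes grp: "group G" and w: "w \<in> short_cocycles1 X UU Y G"
begin

sublocale G: group G by (rule grp)

abbreviation "SP \<equiv> short_paths X UU"

lemma w_car: "p \<in> SP \<Longrightarrow> w p \<in> carrier G"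
  using w unfolding short_cocycles1_def by auto
lemma w_ext: "w \<in> extensional SP"
  using w unfolding short_cocycles1_def by auto
lemma w_Y: "p \<in> SP \<Longrightarrow> p ` {0..1} \<subseteq> Y \<Longrightarrow> w p = \<one>\<^bsub>G\<^esub>"
  using w unfolding short_cocycles1_def by auto
lemma w_hom: "p \<in> SP \<Longrightarrow> q \<in> SP \<Longrightarrow> short_homotopic X UU p q \<Longrightarrow> w p = w q"
  using w unfolding short_cocycles1_def by auto
lemma w_join: "p \<in> SP \<Longrightarrow> q \<in> SP \<Longrightarrow> p 1 = q 0 \<Longrightarrow> pjoin p q \<in> SP \<Longrightarrow> w (pjoin p q) = w p \<otimes>\<^bsub>G\<^esub> w q"
  using w unfolding short_cocycles1_def by auto

lemma w_const: assumes "x \<in> topspace X" shows "w (\<lambda>t. x) = \<one>\<^bsub>G\<^esub>"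
proof -
  have e: "pjoin (\<lambda>t. x) (\<lambda>t. x) = (\<lambda>t. x)" by (simp add: pjoin_def)
  have "w (\<lambda>t. x) = w (\<lambda>t. x) \<otimes>\<^bsub>G\<^esub> w (\<lambda>t. x)"
    using w_join[of "\<lambda>t. x" "\<lambda>t. x"] const_short[OF assms] unfolding e by simp
  then show ?thesis using w_car[OF const_short[OF assms]] by simp
qed

lemma w_cong:
  assumes "p \<in> SP" "q \<in> SP" "\<And>t. t \<in> {0..1} \<Longrightarrow> p t = q t"
  shows "w p = w q"
proof (rule w_hom[OF assms(1,2)])
  obtain U where U: "U \<in> UU" "p ` {0..1} \<subseteq> U" and pp: "pathin X p"
    using assms(1) by (auto simp: short_paths_def)
  have "homotopic_with (\<lambda>r. r 0 = p 0 \<and> r 1 = p 1) (top_of_set {0..1}) (subtopology X U) p q"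
  proof (rule homotopic_with_equal)
    show "continuous_map (top_of_set {0..1}) (subtopology X U) p"
      using pp U by (auto simp: pathin_def continuous_map_in_subtopology)
  qed (use assms(3) in auto)
  then show "short_homotopic X UU p q" unfolding short_homotopic_def using U by blast
qed

lemma square:
  fixes \<alpha>1 \<beta>1 \<alpha>2 \<beta>2 :: "real \<Rightarrow> 'v::real_normed_vector"
  assumes h: "continuous_map (top_of_set T) X h" and cvx: "convex T" and U: "U \<in> UU" "h ` T \<subseteq> U"
    and pa: "path \<alpha>1" "path \<beta>1" "path \<alpha>2" "path \<beta>2"
    and im: "path_image \<alpha>1 \<subseteq> T" "path_image \<beta>1 \<subseteq> T" "path_image \<alpha>2 \<subseteq> T" "path_image \<beta>2 \<subseteq> T"
    and e: "pathfinish \<alpha>1 = pathstart \<beta>1" "pathfinish \<alpha>2 = pathstart \<beta>2"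
      "pathstart \<alpha>1 = pathstart \<alpha>2" "pathfinish \<beta>1 = pathfinish \<beta>2"
  shows "w (h \<circ> \<alpha>1) \<otimes>\<^bsub>G\<^esub> w (h \<circ> \<beta>1) = w (h \<circ> \<alpha>2) \<otimes>\<^bsub>G\<^esub> w (h \<circ> \<beta>2)"
proof -
  have sp: "h \<circ> \<gamma> \<in> SP" if "path \<gamma>" "path_image \<gamma> \<subseteq> T" for \<gamma>
    using short_comp[OF h _ _ order_refl U] that unfolding path_def path_image_def by blast
  have j: "w (h \<circ> (\<alpha> +++ \<beta>)) = w (h \<circ> \<alpha>) \<otimes>\<^bsub>G\<^esub> w (h \<circ> \<beta>)"
    if "path \<alpha>" "path \<beta>" "path_image \<alpha> \<subseteq> T" "path_image \<beta> \<subseteq> T" "pathfinish \<alpha> = pathstart \<beta>" for \<alpha> \<beta>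
  proof -
    have "pjoin (h \<circ> \<alpha>) (h \<circ> \<beta>) \<in> SP"
      unfolding pjoin_comp using that path_image_join_subset[of \<alpha> \<beta>]
      by (intro sp path_join_imp) auto
    then show ?thesis
      using w_join[of "h \<circ> \<alpha>" "h \<circ> \<beta>"] sp that by (simp add: pjoin_comp pathstart_def pathfinish_def)
  qed
  have hh: "short_homotopic X UU (h \<circ> (\<alpha>1 +++ \<beta>1)) (h \<circ> (\<alpha>2 +++ \<beta>2))"
    unfolding short_homotopic_def
  proof (intro bexI[OF _ U(1)] convex_homotopic[OF h cvx U(2)])
    show "continuous_on {0..1} (\<alpha>1 +++ \<beta>1)" "continuous_on {0..1} (\<alpha>2 +++ \<beta>2)"
      using path_join_imp pa e unfolding path_def by blast+
    show "(\<alpha>1 +++ \<beta>1) ` {0..1} \<subseteq> T" "(\<alpha>2 +++ \<beta>2) ` {0..1} \<subseteq> T"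
      using path_image_join_subset[of \<alpha>1 \<beta>1] path_image_join_subset[of \<alpha>2 \<beta>2] im
      unfolding path_image_def by blast+
    show "(\<alpha>1 +++ \<beta>1) 0 = (\<alpha>2 +++ \<beta>2) 0" "(\<alpha>1 +++ \<beta>1) 1 = (\<alpha>2 +++ \<beta>2) 1"
      using e pathstart_join[of \<alpha>1 \<beta>1] pathstart_join[of \<alpha>2 \<beta>2] pathfinish_join[of \<alpha>1 \<beta>1] pathfinish_join[of \<alpha>2 \<beta>2]
      unfolding pathstart_def pathfinish_def by auto
  qed
  have "w (h \<circ> (\<alpha>1 +++ \<beta>1)) = w (h \<circ> (\<alpha>2 +++ \<beta>2))"
  proof (rule w_hom[OF sp sp hh])
    show "path (\<alpha>1 +++ \<beta>1)" "path (\<alpha>2 +++ \<beta>2)" using path_join_imp pa e by blast+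
    show "path_image (\<alpha>1 +++ \<beta>1) \<subseteq> T" "path_image (\<alpha>2 +++ \<beta>2) \<subseteq> T"
      using path_image_join_subset[of \<alpha>1 \<beta>1] path_image_join_subset[of \<alpha>2 \<beta>2] im by blast+
  qed
  then show ?thesis using j pa im e by simp
qed

lemma w_add:
  assumes p: "pathin X p" and "0 \<le> a" "a \<le> b" "b \<le> c" "c \<le> 1" "U \<in> UU" "p ` {a..c} \<subseteq> U"
  shows "w (sub p a c) = w (sub p a b) \<otimes>\<^bsub>G\<^esub> w (sub p b c)"
proof -
  have h: "continuous_map (top_of_set {a..c}) X p"
  proof (rule continuous_map_from_subtopology_mono)
    show "continuous_map (top_of_set {0..1}) X p" using p by (simp add: pathin_def)
    show "{a..c} \<subseteq> {0..1::real}" using assms by auto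
  qed
  have lin: "path (\<lambda>t. x + (y - x) * t)" "path_image (\<lambda>t. x + (y - x) * t) \<subseteq> {a..c}"
    if "x \<in> {a..c}" "y \<in> {a..c}" for x y :: real
  proof -
    show "path (\<lambda>t. x + (y - x) * t)" unfolding path_def by (intro continuous_intros)
    show "path_image (\<lambda>t. x + (y - x) * t) \<subseteq> {a..c}"
      unfolding path_image_def using that by (intro image_subsetI aff_in) auto
  qed
  have "w (p \<circ> (\<lambda>t. a + (b - a) * t)) \<otimes>\<^bsub>G\<^esub> w (p \<circ> (\<lambda>t. b + (c - b) * t))
      = w (p \<circ> (\<lambda>t. a + (c - a) * t)) \<otimes>\<^bsub>G\<^esub> w (p \<circ> (\<lambda>t. c + (c - c) * t))"
  proof (rule square[OF h _ assms(6,7)])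
    have ab: "a \<in> {a..c}" "b \<in> {a..c}" "c \<in> {a..c}" using assms by auto
    show "path (\<lambda>t. a + (b - a) * t)" "path (\<lambda>t. b + (c - b) * t)" "path (\<lambda>t. a + (c - a) * t)"
      "path (\<lambda>t. c + (c - c) * t)" using lin(1)[OF ab(1,2)] lin(1)[OF ab(2,3)] lin(1)[OF ab(1,3)] lin(1)[OF ab(3,3)] by auto
    show "path_image (\<lambda>t. a + (b - a) * t) \<subseteq> {a..c}" "path_image (\<lambda>t. b + (c - b) * t) \<subseteq> {a..c}"
      "path_image (\<lambda>t. a + (c - a) * t) \<subseteq> {a..c}" "path_image (\<lambda>t. c + (c - c) * t) \<subseteq> {a..c}"
      using lin(2)[OF ab(1,2)] lin(2)[OF ab(2,3)] lin(2)[OF ab(1,3)] lin(2)[OF ab(3,3)] by auto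
  qed (auto simp: pathstart_def pathfinish_def)
  moreover have "p c \<in> topspace X" using p assms by (auto simp: pathin_def continuous_map_def)
  then have "w (p \<circ> (\<lambda>t. c + (c - c) * t)) = \<one>\<^bsub>G\<^esub>" by (simp add: o_def w_const)
  moreover have "sub p a c \<in> SP" by (rule sub_short[OF p _ _ _ assms(6,7)]) (use assms in auto)
  ultimately show ?thesis unfolding sub_comp[symmetric] using w_car by simp
qed

definition "LP p F d a0 b0 \<longleftrightarrow>
  (\<forall>a b. a0 \<le> a \<longrightarrow> a \<le> b \<longrightarrow> b \<le> b0 \<longrightarrow> b - a < d \<longrightarrow> F b = F a \<otimes>\<^bsub>G\<^esub> w (sub p a b))"

lemma LPD: "LP p F d a0 b0 \<Longrightarrow> a0 \<le> a \<Longrightarrow> a \<le> b \<Longrightarrow> b \<le> b0 \<Longrightarrow> b - a < d \<Longrightarrow>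
   F b = F a \<otimes>\<^bsub>G\<^esub> w (sub p a b)"
  unfolding LP_def by blast

lemma LP_mono: assumes "LP p F d a0 b0" "a0 \<le> a1" "b1 \<le> b0" shows "LP p F d a1 b1"
  unfolding LP_def
proof (intro allI impI)
  fix a b assume "a1 \<le> a" "a \<le> b" "b \<le> b1" "b - a < d"
  then show "F b = F a \<otimes>\<^bsub>G\<^esub> w (sub p a b)" using assms by (intro LPD[OF assms(1)]) auto
qed

lemma LP_unique:
  assumes L1: "LP p F1 d a0 b0" and L2: "LP p F2 d a0 b0" and d: "d > 0" and e: "F1 a0 = F2 a0"
    and t: "a0 \<le> t" "t \<le> b0"
  shows "F1 t = F2 t"
proof -
  have ind: "\<forall>t. a0 \<le> t \<longrightarrow> t \<le> b0 \<longrightarrow> t \<le> a0 + real k * (d/2) \<longrightarrow> F1 t = F2 t" for k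
  proof (induction k)
    case 0 then show ?case using e by auto
  next
    case (Suc k)
    show ?case
    proof (intro allI impI)
      fix t assume t: "a0 \<le> t" "t \<le> b0" "t \<le> a0 + real (Suc k) * (d/2)"
      show "F1 t = F2 t"
      proof (cases "t \<le> a0 + real k * (d/2)")
        case True then show ?thesis using Suc.IH t by blast
      next
        case False
        define c where "c = a0 + real k * (d/2)"
        have "real (Suc k) * (d/2) = real k * (d/2) + d/2" by (simp add: algebra_simps)
        note sk = this
        have c: "a0 \<le> c" "c \<le> t" "t - c < d"
        proof -
          show "a0 \<le> c" using d by (simp add: c_def)
          show "c \<le> t" using False by (simp add: c_def)
          show "t - c < d" using t(3) d sk unfolding c_def by linarith
        qed
        have "F1 c = F2 c" using Suc.IH c t by (auto simp: c_def)
        moreover have "F1 t = F1 c \<otimes>\<^bsub>G\<^esub> w (sub p c t)" using LPD[OF L1 c(1,2) t(2) c(3)] .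
        moreover have "F2 t = F2 c \<otimes>\<^bsub>G\<^esub> w (sub p c t)" using LPD[OF L2 c(1,2) t(2) c(3)] .
        ultimately show ?thesis by simp
      qed
    qed
  qed
  have "d/2 > 0" using d by simp
  from reals_Archimedean3[OF this] obtain k where "b0 - a0 < real k * (d/2)" by blast
  then show ?thesis using ind[of k] t by auto
qed

lemma LP_exists:
  assumes p: "pathin X p" and d: "d > 0"
    and leb: "\<And>a b. 0 \<le> a \<Longrightarrow> a \<le> b \<Longrightarrow> b \<le> 1 \<Longrightarrow> b - a < d \<Longrightarrow> \<exists>U\<in>UU. p ` {a..b} \<subseteq> U"
  shows "\<exists>F. F 0 = \<one>\<^bsub>G\<^esub> \<and> (\<forall>t\<in>{0..1}. F t \<in> carrier G) \<and> LP p F d 0 1"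
proof -
  have shortab: "sub p a b \<in> SP" if "0 \<le> a" "a \<le> b" "b \<le> 1" "b - a < d" for a b
    using leb[OF that] sub_short[OF p that(1-3)] by blast
  have addab: "w (sub p a c) = w (sub p a b) \<otimes>\<^bsub>G\<^esub> w (sub p b c)"
    if "0 \<le> a" "a \<le> b" "b \<le> c" "c \<le> 1" "c - a < d" for a b c
  proof -
    have "\<exists>U\<in>UU. p ` {a..c} \<subseteq> U" using that by (intro leb) auto
    then obtain U where "U \<in> UU" "p ` {a..c} \<subseteq> U" by blast
    then show ?thesis using w_add[OF p that(1-4)] by blast
  qed
  have p0: "p x \<in> topspace X" if "x \<in> {0..1}" for x
    using p that unfolding pathin_def by (metis continuous_map_image_subset_topspace image_subset_iff topspace_euclidean_subtopology)
  have ind: "\<exists>F. F 0 = \<one>\<^bsub>G\<^esub> \<and> (\<forall>t. 0 \<le> t \<longrightarrow> t \<le> min 1 (real k * (d/2)) \<longrightarrow> F t \<in> carrier G)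
              \<and> LP p F d 0 (min 1 (real k * (d/2)))" for k
  proof (induction k)
    case 0
    have "LP p (\<lambda>_. \<one>\<^bsub>G\<^esub>) d 0 0" unfolding LP_def
    proof (intro allI impI)
      fix a b :: real assume "0 \<le> a" "a \<le> b" "b \<le> 0" "b - a < d"
      then have "a = 0" "b = 0" by auto
      then show "\<one>\<^bsub>G\<^esub> = \<one>\<^bsub>G\<^esub> \<otimes>\<^bsub>G\<^esub> w (sub p a b)"
        using w_const[OF p0[of 0]] by (simp add: sub_const)
    qed
    then show ?case by auto
  next
    case (Suc k)
    then obtain F where F: "F 0 = \<one>\<^bsub>G\<^esub>" "\<And>t. 0 \<le> t \<Longrightarrow> t \<le> min 1 (real k * (d/2)) \<Longrightarrow> F t \<in> carrier G"
      "LP p F d 0 (min 1 (real k * (d/2)))" by blast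
    define c where "c = min 1 (real k * (d/2))"
    define c' where "c' = min 1 (real (Suc k) * (d/2))"
    have sk: "real (Suc k) * (d/2) = real k * (d/2) + d/2" by (simp add: algebra_simps)
    have c0: "0 \<le> c" "c \<le> c'" "c' \<le> 1" using d sk by (auto simp: c_def c'_def)
    have cd: "t - c \<le> d/2" if "c < t" "t \<le> c'" for t
      using that sk by (auto simp: c_def c'_def min_def split: if_splits)
    have Fc: "F t \<in> carrier G" if "0 \<le> t" "t \<le> c" for t using F(2) that by (simp add: c_def)
    have LPF: "LP p F d 0 c" using F(3) by (simp add: c_def)
    define F' where "F' = (\<lambda>t. if t \<le> c then F t else F c \<otimes>\<^bsub>G\<^esub> w (sub p c t))"
    have car: "F' t \<in> carrier G" if "0 \<le> t" "t \<le> c'" for t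
    proof (cases "t \<le> c")
      case True then show ?thesis using Fc that by (simp add: F'_def)
    next
      case False
      then have "sub p c t \<in> SP" using shortab[of c t] cd[of t] that c0 d by auto
      then show ?thesis using False Fc[of c] c0 w_car by (simp add: F'_def)
    qed
    have "LP p F' d 0 c'"
      unfolding LP_def
    proof (intro allI impI)
      fix a b assume ab: "0 \<le> a" "a \<le> b" "b \<le> c'" "b - a < d"
      consider "b \<le> c" | "c < a" | "a \<le> c" "c < b" by linarith
      then show "F' b = F' a \<otimes>\<^bsub>G\<^esub> w (sub p a b)"
      proof cases
        case 1 then show ?thesis using LPD[OF LPF ab(1,2) 1 ab(4)] ab by (simp add: F'_def)
      next
        case 2
        have s1: "sub p c a \<in> SP" "sub p a b \<in> SP" using shortab cd[of a] cd[of b] 2 ab c0 d by auto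
        have "w (sub p c b) = w (sub p c a) \<otimes>\<^bsub>G\<^esub> w (sub p a b)"
          using addab[of c a b] cd[of b] 2 ab c0 d by auto
        then show ?thesis using 2 ab Fc[of c] c0 w_car[OF s1(1)] w_car[OF s1(2)]
          by (simp add: F'_def G.m_assoc)
      next
        case 3
        have s1: "sub p a c \<in> SP" "sub p c b \<in> SP" using shortab cd[of b] 3 ab c0 d by auto
        have "w (sub p a b) = w (sub p a c) \<otimes>\<^bsub>G\<^esub> w (sub p c b)"
          using addab[of a c b] 3 ab c0 by auto
        moreover have "F c = F a \<otimes>\<^bsub>G\<^esub> w (sub p a c)" using 3 ab c0 by (intro LPD[OF LPF]) auto
        ultimately show ?thesis using 3 Fc[of a] ab w_car[OF s1(1)] w_car[OF s1(2)]
          by (simp add: F'_def G.m_assoc)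
      qed
    qed
    moreover have "F' 0 = \<one>\<^bsub>G\<^esub>" using F(1) c0 by (simp add: F'_def)
    ultimately show ?case using car unfolding c'_def by blast
  qed
  have "d/2 > 0" using d by simp
  from reals_Archimedean3[OF this] obtain k where "1 < real k * (d/2)" by blast
  then have "min 1 (real k * (d/2)) = 1" by simp
  then show ?thesis using ind[of k] by auto
qed

definition "Lift p F \<longleftrightarrow> F 0 = \<one>\<^bsub>G\<^esub> \<and> (\<forall>t\<in>{0..1}. F t \<in> carrier G) \<and>
   (\<forall>a b. 0 \<le> a \<longrightarrow> a \<le> b \<longrightarrow> b \<le> 1 \<longrightarrow> (\<exists>U\<in>UU. p ` {a..b} \<subseteq> U) \<longrightarrow> F b = F a \<otimes>\<^bsub>G\<^esub> w (sub p a b))"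

lemma Lift_LP:
  assumes "Lift p F" "\<And>a b. 0 \<le> a \<Longrightarrow> a \<le> b \<Longrightarrow> b \<le> 1 \<Longrightarrow> b - a < d \<Longrightarrow> \<exists>U\<in>UU. p ` {a..b} \<subseteq> U"
  shows "LP p F d 0 1"
  unfolding LP_def
proof (intro allI impI)
  fix a b :: real assume ab: "0 \<le> a" "a \<le> b" "b \<le> 1" "b - a < d"
  then have "\<exists>U\<in>UU. p ` {a..b} \<subseteq> U" using assms(2) by blast
  then show "F b = F a \<otimes>\<^bsub>G\<^esub> w (sub p a b)" using assms(1) ab unfolding Lift_def by blast
qed

lemma Lift_unique:
  assumes p: "pathin X p" and "Lift p F1" "Lift p F2" "t \<in> {0..1}"
  shows "F1 t = F2 t"
proof -
  obtain d where d: "d > 0" "\<And>a b. 0 \<le> a \<Longrightarrow> a \<le> b \<Longrightarrow> b \<le> 1 \<Longrightarrow> b - a < d \<Longrightarrow> \<exists>U\<in>UU. p ` {a..b} \<subseteq> U"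
    using path_leb[OF p] by blast
  show ?thesis
    by (rule LP_unique[OF Lift_LP[OF assms(2) d(2)] Lift_LP[OF assms(3) d(2)] d(1)])
       (use assms in \<open>auto simp: Lift_def\<close>)
qed

lemma Lift_exists:
  assumes p: "pathin X p"
  shows "\<exists>F. Lift p F"
proof -
  obtain d where d: "d > 0" and leb: "\<And>a b. 0 \<le> a \<Longrightarrow> a \<le> b \<Longrightarrow> b \<le> 1 \<Longrightarrow> b - a < d \<Longrightarrow> \<exists>U\<in>UU. p ` {a..b} \<subseteq> U"
    using path_leb[OF p] by blast
  obtain F where F: "F 0 = \<one>\<^bsub>G\<^esub>" "\<And>t. t \<in> {0..1} \<Longrightarrow> F t \<in> carrier G" "LP p F d 0 1"
    using LP_exists[OF p d leb] by blast
  have "F b = F a \<otimes>\<^bsub>G\<^esub> w (sub p a b)"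
    if ab: "0 \<le> a" "a \<le> b" "b \<le> 1" and U: "U \<in> UU" "p ` {a..b} \<subseteq> U" for a b U
  proof -
    define H where "H = (\<lambda>t. F a \<otimes>\<^bsub>G\<^esub> w (sub p a t))"
    have sh: "sub p x y \<in> SP" if "a \<le> x" "x \<le> y" "y \<le> b" for x y
      by (rule sub_short[OF p _ _ _ U(1)]) (use that ab U(2) in auto)
    have "LP p H d a b" unfolding LP_def
    proof (intro allI impI)
      fix x y assume xy: "a \<le> x" "x \<le> y" "y \<le> b" "y - x < d"
      have "w (sub p a y) = w (sub p a x) \<otimes>\<^bsub>G\<^esub> w (sub p x y)"
        by (rule w_add[OF p _ _ _ _ U(1)]) (use xy ab U(2) in auto)
      then show "H y = H x \<otimes>\<^bsub>G\<^esub> w (sub p x y)"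
        using F(2)[of a] ab w_car[OF sh[of a x]] w_car[OF sh[of x y]] xy
        by (simp add: H_def G.m_assoc)
    qed
    moreover have "LP p F d a b" by (rule LP_mono[OF F(3)]) (use ab in auto)
    moreover have "p a \<in> topspace X" using p ab by (auto simp: pathin_def continuous_map_def)
    then have "H a = F a" using F(2)[of a] ab by (simp add: H_def sub_const w_const)
    ultimately have "F b = H b" using LP_unique[of p F d a b H b] d ab by auto
    then show ?thesis by (simp add: H_def)
  qed
  then have "Lift p F" unfolding Lift_def using F by blast
  then show ?thesis by blast
qed

definition "wext = (\<lambda>p\<in>paths_of X. (SOME F. Lift p F) 1)"

lemma wext_eq:
  assumes "pathin X p" "Lift p F"
  shows "wext p = F 1"
proof -
  have "Lift p (SOME F. Lift p F)" using someI_ex[OF Lift_exists[OF assms(1)]] .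
  then have "(SOME F. Lift p F) 1 = F 1" using Lift_unique[OF assms(1) _ assms(2), of _ 1] by simp
  then show ?thesis using assms(1) by (simp add: wext_def paths_of_def)
qed

lemma wext_car: "pathin X p \<Longrightarrow> wext p \<in> carrier G"
  using Lift_exists wext_eq by (fastforce simp: Lift_def)

lemma wext_short:
  assumes "p \<in> SP"
  shows "wext p = w p"
proof -
  obtain U where U: "U \<in> UU" "p ` {0..1} \<subseteq> U" and p: "pathin X p"
    using assms by (auto simp: short_paths_def)
  have sh: "sub p x y \<in> SP" if "0 \<le> x" "x \<le> y" "y \<le> 1" for x y
    by (rule sub_short[OF p that U(1)]) (use that U(2) in auto)
  have "Lift p (\<lambda>t. w (sub p 0 t))"
    unfolding Lift_def
  proof (intro conjI ballI allI impI)
    show "w (sub p 0 0) = \<one>\<^bsub>G\<^esub>" using pathin_top[OF p, of 0] by (simp add: sub_const w_const)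
    show "w (sub p 0 t) \<in> carrier G" if "t \<in> {0..1}" for t using that sh[of 0 t] w_car by auto
    fix a b assume ab: "0 \<le> a" "a \<le> b" "b \<le> 1" "\<exists>U\<in>UU. p ` {a..b} \<subseteq> U"
    show "w (sub p 0 b) = w (sub p 0 a) \<otimes>\<^bsub>G\<^esub> w (sub p a b)"
      by (rule w_add[OF p _ _ _ _ U(1)]) (use ab U(2) in auto)
  qed
  then show ?thesis using wext_eq[OF p] by simp
qed

lemma wext_Y:
  assumes p: "pathin X p" and Y: "p ` {0..1} \<subseteq> Y"
  shows "wext p = \<one>\<^bsub>G\<^esub>"
proof -
  have "Lift p (\<lambda>t. \<one>\<^bsub>G\<^esub>)"
    unfolding Lift_def
  proof (intro conjI ballI allI impI)
    fix a b assume ab: "0 \<le> a" "a \<le> b" "b \<le> 1" "\<exists>U\<in>UU. p ` {a..b} \<subseteq> U"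
    then obtain U where U: "U \<in> UU" "p ` {a..b} \<subseteq> U" by blast
    have s: "sub p a b \<in> SP" by (rule sub_short[OF p ab(1-3) U])
    moreover have "{a..b} \<subseteq> {0..1}" using ab by auto
    then have "p ` {a..b} \<subseteq> Y" using Y image_mono by blast
    then have "sub p a b ` {0..1} \<subseteq> Y" using sub_image[OF ab(2), of p] by blast
    ultimately show "\<one>\<^bsub>G\<^esub> = \<one>\<^bsub>G\<^esub> \<otimes>\<^bsub>G\<^esub> w (sub p a b)" using w_Y by simp
  qed auto
  then show ?thesis using wext_eq[OF p] by simp
qed

lemma join_left:
  assumes p: "pathin X p" and q: "pathin X q" and pq: "p 1 = q 0"
    and ab: "0 \<le> a" "a \<le> b" "b \<le> 1/2" and U: "U \<in> UU" "pjoin p q ` {a..b} \<subseteq> U"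
  shows "p ` {2*a..2*b} \<subseteq> U" "w (sub (pjoin p q) a b) = w (sub p (2*a) (2*b))"
proof -
  show im: "p ` {2*a..2*b} \<subseteq> U"
  proof
    fix z assume "z \<in> p ` {2*a..2*b}"
    then obtain x where x: "x \<in> {2*a..2*b}" "z = p x" by blast
    then have "z = pjoin p q (x/2)" "x/2 \<in> {a..b}" using ab by (auto simp: pq_left)
    then show "z \<in> U" using U by auto
  qed
  have ppq: "pathin X (pjoin p q)" by (rule pathin_pjoin[OF p q pq])
  show "w (sub (pjoin p q) a b) = w (sub p (2*a) (2*b))"
  proof (rule w_cong)
    show "sub (pjoin p q) a b \<in> SP" by (rule sub_short[OF ppq _ _ _ U]) (use ab in auto)
    show "sub p (2*a) (2*b) \<in> SP" by (rule sub_short[OF p _ _ _ U(1) im]) (use ab in auto)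
    fix t :: real assume t: "t \<in> {0..1}"
    have "a + (b - a) * t \<le> 1/2" using aff_in_ab[OF ab(2) t] ab by auto
    note le = this
    have e: "2*a + (2*b - 2*a) * t = 2 * (a + (b - a) * t)" by (simp add: algebra_simps)
    show "sub (pjoin p q) a b t = sub p (2*a) (2*b) t" unfolding sub_def e by (rule pq_left[OF le])
  qed
qed

lemma join_right:
  assumes p: "pathin X p" and q: "pathin X q" and pq: "p 1 = q 0"
    and ab: "1/2 \<le> a" "a \<le> b" "b \<le> 1" and U: "U \<in> UU" "pjoin p q ` {a..b} \<subseteq> U"
  shows "q ` {2*a-1..2*b-1} \<subseteq> U" "w (sub (pjoin p q) a b) = w (sub q (2*a-1) (2*b-1))"
proof -
  show im: "q ` {2*a-1..2*b-1} \<subseteq> U"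
  proof
    fix z assume "z \<in> q ` {2*a-1..2*b-1}"
    then obtain x where x: "x \<in> {2*a-1..2*b-1}" "z = q x" by blast
    moreover have "1/2 \<le> (x+1)/2" using x ab by auto
    ultimately have "z = pjoin p q ((x+1)/2)" "(x+1)/2 \<in> {a..b}" using ab pq_right[of p q "(x+1)/2", OF pq]
      by (auto simp: field_simps)
    then show "z \<in> U" using U by auto
  qed
  have ppq: "pathin X (pjoin p q)" by (rule pathin_pjoin[OF p q pq])
  show "w (sub (pjoin p q) a b) = w (sub q (2*a-1) (2*b-1))"
  proof (rule w_cong)
    show "sub (pjoin p q) a b \<in> SP" by (rule sub_short[OF ppq _ _ _ U]) (use ab in auto)
    show "sub q (2*a-1) (2*b-1) \<in> SP" by (rule sub_short[OF q _ _ _ U(1) im]) (use ab in auto)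
    fix t :: real assume t: "t \<in> {0..1}"
    have "1/2 \<le> a + (b - a) * t" using aff_in_ab[OF ab(2) t] ab by auto
    note le = this
    have e: "(2*a-1) + ((2*b-1) - (2*a-1)) * t = 2 * (a + (b - a) * t) - 1" by (simp add: algebra_simps)
    show "sub (pjoin p q) a b t = sub q (2*a-1) (2*b-1) t" unfolding sub_def e by (rule pq_right[of p q, OF pq le])
  qed
qed

lemma LiftD:
  assumes "Lift p F" "0 \<le> a" "a \<le> b" "b \<le> 1" "U \<in> UU" "p ` {a..b} \<subseteq> U"
  shows "F b = F a \<otimes>\<^bsub>G\<^esub> w (sub p a b)"
  using assms unfolding Lift_def by blast

lemma Lift_car: "Lift p F \<Longrightarrow> t \<in> {0..1} \<Longrightarrow> F t \<in> carrier G"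
  unfolding Lift_def by blast

lemma Lift_0: "Lift p F \<Longrightarrow> F 0 = \<one>\<^bsub>G\<^esub>"
  unfolding Lift_def by blast

lemma wext_join:
  assumes p: "pathin X p" and q: "pathin X q" and pq: "p 1 = q 0"
  shows "wext (pjoin p q) = wext p \<otimes>\<^bsub>G\<^esub> wext q"
proof -
  obtain Fp Fq where Fp: "Lift p Fp" and Fq: "Lift q Fq" using Lift_exists p q by blast
  have ppq: "pathin X (pjoin p q)" by (rule pathin_pjoin[OF p q pq])
  define H where "H = (\<lambda>t. if t \<le> 1/2 then Fp (2*t) else Fp 1 \<otimes>\<^bsub>G\<^esub> Fq (2*t - 1))"
  have Hlo: "H t = Fp (2*t)" if "t \<le> 1/2" for t using that by (simp add: H_def)
  have Hhi: "H t = Fp 1 \<otimes>\<^bsub>G\<^esub> Fq (2*t - 1)" if "1/2 \<le> t" for t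
  proof (cases "t = 1/2")
    case True
    then have y: "t \<le> 1/2" "2*t = 1" "2*t - 1 = 0" by simp_all
    have "H t = Fp 1" using y unfolding H_def by simp
    moreover have "Fq (2*t - 1) = \<one>\<^bsub>G\<^esub>" unfolding y(3) by (rule Lift_0[OF Fq])
    ultimately show ?thesis using Lift_car[OF Fp, of 1] by simp
  qed (use that in \<open>simp add: H_def\<close>)
  have Fpc: "Fp t \<in> carrier G" if "t \<in> {0..1}" for t using Lift_car[OF Fp that] .
  have Fqc: "Fq t \<in> carrier G" if "t \<in> {0..1}" for t using Lift_car[OF Fq that] .
  have "Lift (pjoin p q) H"
    unfolding Lift_def
  proof (intro conjI ballI allI impI)
    show "H 0 = \<one>\<^bsub>G\<^esub>" using Lift_0[OF Fp] by (simp add: H_def)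
    show "H t \<in> carrier G" if "t \<in> {0..1}" for t
      using that Fpc Fqc by (cases "t \<le> 1/2") (auto simp: H_def)
    fix a b assume ab: "0 \<le> a" "a \<le> b" "b \<le> 1" "\<exists>U\<in>UU. pjoin p q ` {a..b} \<subseteq> U"
    then obtain U where U: "U \<in> UU" "pjoin p q ` {a..b} \<subseteq> U" by blast
    consider "b \<le> 1/2" | "1/2 \<le> a" | "a < 1/2" "1/2 < b" by linarith
    then show "H b = H a \<otimes>\<^bsub>G\<^esub> w (sub (pjoin p q) a b)"
    proof cases
      case 1
      note jl = join_left[OF p q pq ab(1,2) 1 U]
      have "Fp (2*b) = Fp (2*a) \<otimes>\<^bsub>G\<^esub> w (sub p (2*a) (2*b))"
        by (rule LiftD[OF Fp _ _ _ U(1) jl(1)]) (use ab 1 in auto)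
      then show ?thesis using 1 ab Hlo jl(2) by simp
    next
      case 2
      note jr = join_right[OF p q pq 2 ab(2,3) U]
      have "Fq (2*b-1) = Fq (2*a-1) \<otimes>\<^bsub>G\<^esub> w (sub q (2*a-1) (2*b-1))"
        by (rule LiftD[OF Fq _ _ _ U(1) jr(1)]) (use ab 2 in auto)
      moreover have "sub q (2*a-1) (2*b-1) \<in> SP" by (rule sub_short[OF q _ _ _ U(1) jr(1)]) (use ab 2 in auto)
      ultimately show ?thesis using 2 ab Hhi jr(2) Fpc[of 1] Fqc[of "2*a-1"] w_car
        by (simp add: G.m_assoc)
    next
      case 3
      have U1: "pjoin p q ` {a..1/2} \<subseteq> U" "pjoin p q ` {1/2..b} \<subseteq> U" using U(2) 3 by auto
      note jl = join_left[OF p q pq ab(1) _ _ U(1) U1(1)]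
      note jr = join_right[OF p q pq _ _ ab(3) U(1) U1(2)]
      have "w (sub (pjoin p q) a b) = w (sub (pjoin p q) a (1/2)) \<otimes>\<^bsub>G\<^esub> w (sub (pjoin p q) (1/2) b)"
        by (rule w_add[OF ppq _ _ _ _ U]) (use ab 3 in auto)
      also have "\<dots> = w (sub p (2*a) 1) \<otimes>\<^bsub>G\<^esub> w (sub q 0 (2*b-1))"
        using jl(2) jr(2) 3 by simp
      finally have e1: "w (sub (pjoin p q) a b) = w (sub p (2*a) 1) \<otimes>\<^bsub>G\<^esub> w (sub q 0 (2*b-1))" .
      have imp: "p ` {2*a..1} \<subseteq> U" using jl(1) 3 by simp
      have imq: "q ` {0..2*b-1} \<subseteq> U" using jr(1) 3 by simp
      have e2: "Fp 1 = Fp (2*a) \<otimes>\<^bsub>G\<^esub> w (sub p (2*a) 1)"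
        by (rule LiftD[OF Fp _ _ _ U(1) imp]) (use ab 3 in auto)
      have e3: "Fq (2*b-1) = Fq 0 \<otimes>\<^bsub>G\<^esub> w (sub q 0 (2*b-1))"
        by (rule LiftD[OF Fq _ _ _ U(1) imq]) (use ab 3 in auto)
      have s1: "sub p (2*a) 1 \<in> SP" by (rule sub_short[OF p _ _ _ U(1) imp]) (use ab 3 in auto)
      have s2: "sub q 0 (2*b-1) \<in> SP" by (rule sub_short[OF q _ _ _ U(1) imq]) (use ab 3 in auto)
      show ?thesis using 3 Hlo[of a] Hhi[of b] e1 e2 e3 Lift_0[OF Fq] Fpc[of "2*a"] ab w_car[OF s1] w_car[OF s2]
        by (simp add: G.m_assoc)
    qed
  qed
  then have "wext (pjoin p q) = H 1" by (rule wext_eq[OF ppq])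
  also have "\<dots> = Fp 1 \<otimes>\<^bsub>G\<^esub> Fq 1" using Hhi[of 1] by simp
  finally show ?thesis using wext_eq[OF p Fp] wext_eq[OF q Fq] by simp
qed

lemma wext_hom:
  assumes p: "pathin X p" and q: "pathin X q" and hom: "phomotopic X p q"
  shows "wext p = wext q"
proof -
  obtain h :: "real \<times> real \<Rightarrow> 'a" where h: "continuous_map (top_of_set ({0..1} \<times> {0..1})) X h"
    and h0': "\<forall>x. h (0, x) = p x" and h1': "\<forall>x. h (1, x) = q x"
    and hP': "\<forall>t\<in>{0..1}. h (t, 0) = p 0 \<and> h (t, 1) = p 1"
    using hom unfolding phomotopic_def homotopic_with_def prod_topology_subtopology_eu by blast
  have h0: "\<And>x. h (0, x) = p x" and h1: "\<And>x. h (1, x) = q x"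
    and hP: "\<And>s. s \<in> {0..1} \<Longrightarrow> h (s, 0) = p 0 \<and> h (s, 1) = p 1"
    using h0' h1' hP' by auto
  define Sq where "Sq = ({0..1} \<times> {0..1} :: (real \<times> real) set)"
  have hS: "continuous_map (top_of_set Sq) X h" using h by (simp add: Sq_def)
  have hc: "continuous_map (top_of_set R) X h" if "R \<subseteq> Sq" for R
    by (rule continuous_map_from_subtopology_mono[OF hS that])
  have "compact Sq" "Sq \<noteq> {}" by (auto simp: Sq_def intro: compact_Times)
  then obtain d where d: "d > 0" "\<And>T. T \<subseteq> Sq \<Longrightarrow> diameter T < d \<Longrightarrow> \<exists>U\<in>UU. h ` T \<subseteq> U"
    using lebesgue[OF _ _ hS] by metis
  have "d/2 > 0" using d by simp
  from reals_Archimedean3[OF this] obtain n :: nat where n: "1 < real n * (d/2)" by blast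
  then have npos: "real n > 0" using d by (cases n) auto
  define e where "e = 1 / real n"
  have e: "e > 0" "2 * e < d" "real n * e = 1" using n npos d by (auto simp: e_def field_simps)
  have Rect: "\<exists>U\<in>UU. h ` ({s..s'} \<times> {a..b}) \<subseteq> U"
    if "0 \<le> s" "s \<le> s'" "s' \<le> 1" "s' - s \<le> e" "0 \<le> a" "a \<le> b" "b \<le> 1" "b - a \<le> e" for s s' a b
  proof (rule d(2))
    show "{s..s'} \<times> {a..b} \<subseteq> Sq" using that by (auto simp: Sq_def)
    have "diameter ({s..s'} \<times> {a..b}) \<le> (s' - s) + (b - a)" by (rule diam_rect) (use that in auto)
    then show "diameter ({s..s'} \<times> {a..b}) < d" using that e by linarith
  qed
  define ps where "ps s = (\<lambda>t. h (s, t))" for s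
  have ps_comp: "ps s = h \<circ> (\<lambda>t. (s, t))" for s by (simp add: ps_def o_def)
  have ps_path: "pathin X (ps s)" if "s \<in> {0..1}" for s
    unfolding ps_comp by (rule pathin_comp[OF hS]) (use that in \<open>auto simp: Sq_def intro!: continuous_intros\<close>)
  define Fs where "Fs s = (SOME F. Lift (ps s) F)" for s
  have FsL: "Lift (ps s) (Fs s)" if "s \<in> {0..1}" for s
    unfolding Fs_def by (rule someI_ex[OF Lift_exists[OF ps_path[OF that]]])
  have step: "Fs s' 1 = Fs s 1" if ss: "0 \<le> s" "s \<le> s'" "s' \<le> 1" "s' - s \<le> e" for s s'
  proof -
    define V where "V t = h \<circ> (\<lambda>r. (s + (s' - s) * r, t))" for t
    define Gf where "Gf t = Fs s t \<otimes>\<^bsub>G\<^esub> w (V t)" for t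
    have sr: "s + (s' - s) * r \<in> {s..s'}" if "r \<in> {0..1}" for r using aff_in_ab[OF ss(2) that] .
    have Vsh: "V t \<in> SP" if t: "t \<in> {0..1}" for t
    proof -
      obtain U where U: "U \<in> UU" "h ` ({s..s'} \<times> {t..t}) \<subseteq> U" using Rect[of s s' t t] ss t e by auto
      show ?thesis unfolding V_def
        by (rule short_comp[OF hS _ _ _ U(1,2)]) (use ss sr t in \<open>auto simp: Sq_def intro!: continuous_intros\<close>)
    qed
    have Vend: "w (V t) = \<one>\<^bsub>G\<^esub>" if "t = 0 \<or> t = 1" for t
    proof -
      have tt: "t \<in> {0..1}" using that by auto
      have pt: "p t \<in> topspace X" using pathin_top[OF p tt] .
      have "w (V t) = w (\<lambda>r. p t)"
      proof (rule w_cong[OF Vsh[OF tt] const_short[OF pt]])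
        fix r :: real assume "r \<in> {0..1}"
        then have "s + (s' - s) * r \<in> {0..1}" using sr ss by force
        then show "V t r = p t" using hP that by (auto simp: V_def)
      qed
      then show ?thesis using w_const[OF pt] by simp
    qed
    have s01: "s \<in> {0..1}" "s' \<in> {0..1}" using ss by auto
    have LPG: "LP (ps s') Gf e 0 1"
      unfolding LP_def
    proof (intro allI impI)
      fix a b assume ab: "0 \<le> a" "a \<le> b" "b \<le> 1" "b - a < e"
      define R where "R = {s..s'} \<times> {a..b}"
      obtain U where U: "U \<in> UU" "h ` R \<subseteq> U" using Rect[of s s' a b] ss ab unfolding R_def by auto
      have RS: "R \<subseteq> Sq" using ss ab by (auto simp: R_def Sq_def)
      have ab01: "a \<in> {0..1}" "b \<in> {0..1}" using ab by auto
      have ta: "a + (b - a) * t \<in> {a..b}" if "t \<in> {0..1}" for t using aff_in_ab[OF ab(2) that] .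
      have psU: "ps s ` {a..b} \<subseteq> U" using U(2) ss by (auto simp: ps_def R_def)
      have psU': "ps s' ` {a..b} \<subseteq> U" using U(2) ss by (auto simp: ps_def R_def)
      have L1: "Fs s b = Fs s a \<otimes>\<^bsub>G\<^esub> w (sub (ps s) a b)"
        by (rule LiftD[OF FsL[OF s01(1)] ab(1-3) U(1) psU])
      have sq: "w (h \<circ> (\<lambda>t. (s, a + (b - a) * t))) \<otimes>\<^bsub>G\<^esub> w (h \<circ> (\<lambda>r. (s + (s' - s) * r, b)))
          = w (h \<circ> (\<lambda>r. (s + (s' - s) * r, a))) \<otimes>\<^bsub>G\<^esub> w (h \<circ> (\<lambda>t. (s', a + (b - a) * t)))"
      proof (rule square[OF hc[OF RS] _ U])
        show "convex R" unfolding R_def by (intro convex_Times convex_real_interval)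
        show "path (\<lambda>t. (s, a + (b - a) * t))" "path (\<lambda>r. (s + (s' - s) * r, b))"
          "path (\<lambda>r. (s + (s' - s) * r, a))" "path (\<lambda>t. (s', a + (b - a) * t))"
          unfolding path_def by (intro continuous_intros)+
        show "path_image (\<lambda>t. (s, a + (b - a) * t)) \<subseteq> R" "path_image (\<lambda>r. (s + (s' - s) * r, b)) \<subseteq> R"
          "path_image (\<lambda>r. (s + (s' - s) * r, a)) \<subseteq> R" "path_image (\<lambda>t. (s', a + (b - a) * t)) \<subseteq> R"
          unfolding path_image_def R_def using ta sr ss ab by auto
      qed (auto simp: pathstart_def pathfinish_def)
      have e1: "h \<circ> (\<lambda>t. (s, a + (b - a) * t)) = sub (ps s) a b" by (simp add: sub_def ps_def o_def)
      have e2: "h \<circ> (\<lambda>t. (s', a + (b - a) * t)) = sub (ps s') a b" by (simp add: sub_def ps_def o_def)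
      have e3: "h \<circ> (\<lambda>r. (s + (s' - s) * r, b)) = V b" "h \<circ> (\<lambda>r. (s + (s' - s) * r, a)) = V a"
        by (simp_all add: V_def)
      have sq': "w (sub (ps s) a b) \<otimes>\<^bsub>G\<^esub> w (V b) = w (V a) \<otimes>\<^bsub>G\<^esub> w (sub (ps s') a b)"
        using sq unfolding e1 e2 e3 .
      have c1: "w (sub (ps s) a b) \<in> carrier G" "w (V b) \<in> carrier G" "w (V a) \<in> carrier G"
        "w (sub (ps s') a b) \<in> carrier G" "Fs s a \<in> carrier G"
        using w_car[OF sub_short[OF ps_path[OF s01(1)] ab(1-3) U(1) psU]]
          w_car[OF sub_short[OF ps_path[OF s01(2)] ab(1-3) U(1) psU']]
          w_car[OF Vsh[OF ab01(1)]] w_car[OF Vsh[OF ab01(2)]] Lift_car[OF FsL[OF s01(1)] ab01(1)] by auto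
      have "Gf b = Fs s a \<otimes>\<^bsub>G\<^esub> (w (sub (ps s) a b) \<otimes>\<^bsub>G\<^esub> w (V b))"
        using L1 c1 by (simp add: Gf_def G.m_assoc)
      also have "\<dots> = Fs s a \<otimes>\<^bsub>G\<^esub> (w (V a) \<otimes>\<^bsub>G\<^esub> w (sub (ps s') a b))" by (simp only: sq')
      also have "\<dots> = Gf a \<otimes>\<^bsub>G\<^esub> w (sub (ps s') a b)" using c1 by (simp add: Gf_def G.m_assoc)
      finally show "Gf b = Gf a \<otimes>\<^bsub>G\<^esub> w (sub (ps s') a b)" .
    qed
    have LPF: "LP (ps s') (Fs s') e 0 1"
    proof (rule Lift_LP[OF FsL[OF s01(2)]])
      fix a b :: real assume ab: "0 \<le> a" "a \<le> b" "b \<le> 1" "b - a < e"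
      then obtain U where U: "U \<in> UU" "h ` ({s..s'} \<times> {a..b}) \<subseteq> U" using Rect[of s s' a b] ss by auto
      then have "ps s' ` {a..b} \<subseteq> U" using ss by (auto simp: ps_def)
      then show "\<exists>U\<in>UU. ps s' ` {a..b} \<subseteq> U" using U(1) by blast
    qed
    have "Gf 0 = \<one>\<^bsub>G\<^esub>" using Vend[of 0] Lift_0[OF FsL[OF s01(1)]] by (simp add: Gf_def)
    then have "Gf 1 = Fs s' 1" using LP_unique[OF LPG LPF e(1)] Lift_0[OF FsL[OF s01(2)]] by simp
    moreover have "Gf 1 = Fs s 1" using Vend[of 1] Lift_car[OF FsL[OF s01(1)], of 1] by (simp add: Gf_def)
    ultimately show ?thesis by simp
  qed
  have "Fs (real j * e) 1 = Fs 0 1" if "j \<le> n" for j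
    using that
  proof (induction j)
    case (Suc j)
    have "real (Suc j) * e \<le> real n * e" using Suc.prems e(1) by (intro mult_right_mono) auto
    then have "real (Suc j) * e \<le> 1" using e by simp
    moreover have "real (Suc j) * e = real j * e + e" by (simp add: algebra_simps)
    ultimately have "Fs (real (Suc j) * e) 1 = Fs (real j * e) 1" using e(1)
      by (intro step) auto
    then show ?case using Suc by simp
  qed simp
  from this[of n] have "Fs 1 1 = Fs 0 1" using e by simp
  moreover have "ps 0 = p" "ps 1 = q" using h0 h1 by (auto simp: ps_def)
  ultimately show ?thesis using wext_eq[OF p, of "Fs 0"] wext_eq[OF q, of "Fs 1"] FsL[of 0] FsL[of 1] by auto
qed

lemma wext_cocycle: "wext \<in> cocycles1 X Y G"
  unfolding cocycles1_def
proof (intro CollectI conjI ballI impI)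
  show "wext \<in> extensional (paths_of X)" by (simp add: wext_def)
  fix p assume p: "p \<in> paths_of X"
  then have pp: "pathin X p" by (simp add: paths_of_def)
  show "wext p \<in> carrier G" by (rule wext_car[OF pp])
  show "wext p = \<one>\<^bsub>G\<^esub>" if "p ` {0..1} \<subseteq> Y" by (rule wext_Y[OF pp that])
  fix q assume q: "q \<in> paths_of X"
  then have qq: "pathin X q" by (simp add: paths_of_def)
  show "wext p = wext q" if "phomotopic X p q" by (rule wext_hom[OF pp qq that])
  show "wext (pjoin p q) = wext p \<otimes>\<^bsub>G\<^esub> wext q" if "p 1 = q 0" by (rule wext_join[OF pp qq that])
qed

lemma restrict_wext: "restrict wext SP = w"
proof
  fix p show "restrict wext SP p = w p"
  proof (cases "p \<in> SP")
    case True then show ?thesis by (simp add: wext_short)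
  next
    case False then show ?thesis using w_ext by (simp add: extensional_def)
  qed
qed

end

lemma short_paths_sub: "short_paths X UU \<subseteq> paths_of X"
  by (auto simp: short_paths_def paths_of_def)

lemma short_paths_top: "short_paths X {topspace X} = paths_of X"
  by (auto simp: short_paths_def paths_of_def intro: pathin_top)

lemma short_homotopic_top: "short_homotopic X {topspace X} p q = phomotopic X p q"
  by (simp add: short_homotopic_def phomotopic_def)

lemma cocycles_top: "cocycles1 X Y G \<subseteq> short_cocycles1 X {topspace X} Y G"
  unfolding cocycles1_def short_cocycles1_def short_paths_top short_homotopic_top by blast

lemma SC_top: assumes "group G" "v \<in> cocycles1 X Y G" shows "SC X {topspace X} Y G v"
  unfolding SC_def SC_axioms_def SC0_def using assms cocycles_top by auto

lemma short_hom_imp: "short_homotopic X UU p q \<Longrightarrow> phomotopic X p q"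
  unfolding short_homotopic_def phomotopic_def homotopic_with_def continuous_map_in_subtopology
  by blast

lemma restrict_cocycle:
  assumes "v \<in> cocycles1 X Y G"
  shows "restrict v (short_paths X UU) \<in> short_cocycles1 X UU Y G"
  using assms short_paths_sub[of X UU] short_hom_imp[of X UU]
  unfolding cocycles1_def short_cocycles1_def by (auto simp: subset_iff)

lemma (in SC) cocycle_eq_wext:
  assumes v: "v \<in> cocycles1 X Y G" and r: "restrict v SP = w"
  shows "v = wext"
proof (rule extensionalityI[of _ "paths_of X"])
  show "v \<in> extensional (paths_of X)" using v by (simp add: cocycles1_def)
  show "wext \<in> extensional (paths_of X)" by (simp add: wext_def)
  interpret V: SC X "{topspace X}" Y G v by (rule SC_top[OF grp v])
  fix p assume "p \<in> paths_of X"
  then have p: "pathin X p" by (simp add: paths_of_def)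
  have top: "p ` {a..b} \<subseteq> topspace X" if "0 \<le> a" "b \<le> 1" for a b using pathin_top[OF p] that by auto
  have vw: "v q = w q" if "q \<in> SP" for q using r that by (metis restrict_apply')
  have "Lift p (\<lambda>t. v (sub p 0 t))"
    unfolding Lift_def
  proof (intro conjI ballI allI impI)
    show "v (sub p 0 0) = \<one>\<^bsub>G\<^esub>" using V.w_const[OF pathin_top[OF p, of 0]] by (simp add: sub_const)
    show "v (sub p 0 t) \<in> carrier G" if "t \<in> {0..1}" for t
      using V.w_car[of "sub p 0 t"] pathin_sub[OF p, of 0 t] that short_paths_top by (auto simp: paths_of_def)
    fix a b assume ab: "0 \<le> a" "a \<le> b" "b \<le> 1" "\<exists>U\<in>UU. p ` {a..b} \<subseteq> U"
    then obtain U where U: "U \<in> UU" "p ` {a..b} \<subseteq> U" by blast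
    have "v (sub p 0 b) = v (sub p 0 a) \<otimes>\<^bsub>G\<^esub> v (sub p a b)"
      by (rule V.w_add[OF p _ _ _ _ _ top[of 0 b]]) (use ab in auto)
    moreover have "v (sub p a b) = w (sub p a b)" by (rule vw[OF sub_short[OF p ab(1-3) U]])
    ultimately show "v (sub p 0 b) = v (sub p 0 a) \<otimes>\<^bsub>G\<^esub> w (sub p a b)" by simp
  qed
  then show "v p = wext p" using wext_eq[OF p] by simp
qed


lemma act_restrict:
  assumes "SP \<subseteq> P"
  shows "restrict (cochain_act G P c u) SP = cochain_act G SP c (restrict u SP)"
  using assms by (auto simp: cochain_act_def fun_eq_iff)

context
  fixes X :: "'a topology" and Y :: "'a set" and G :: "('g, 'b) monoid_scheme"
  assumes grp: "group G" and Ysub: "Y \<subseteq> topspace X"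
begin

interpretation G: group G by (rule grp)

lemma c0_car: "c \<in> cochains0 X Y G \<Longrightarrow> x \<in> topspace X \<Longrightarrow> c x \<in> carrier G"
  by (auto simp: cochains0_def)

lemma c0_ext: "c \<in> cochains0 X Y G \<Longrightarrow> x \<notin> topspace X \<Longrightarrow> c x = undefined"
  by (auto simp: cochains0_def extensional_def)

lemma c0_Y: "c \<in> cochains0 X Y G \<Longrightarrow> y \<in> Y \<Longrightarrow> c y = \<one>\<^bsub>G\<^esub>"
  by (auto simp: cochains0_def)

lemma cochain_mul: "c \<in> cochains0 X Y G \<Longrightarrow> d \<in> cochains0 X Y G \<Longrightarrow>
    (\<lambda>x\<in>topspace X. d x \<otimes>\<^bsub>G\<^esub> c x) \<in> cochains0 X Y G"
  using Ysub by (auto simp: cochains0_def)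

lemma cochain_inv: "c \<in> cochains0 X Y G \<Longrightarrow> (\<lambda>x\<in>topspace X. inv\<^bsub>G\<^esub> (c x)) \<in> cochains0 X Y G"
  using Ysub by (auto simp: cochains0_def)

lemma cochain_one: "(\<lambda>x\<in>topspace X. \<one>\<^bsub>G\<^esub>) \<in> cochains0 X Y G"
  using Ysub by (auto simp: cochains0_def)

lemma act_comp:
  assumes P: "P \<subseteq> paths_of X" and u: "\<And>p. p \<in> P \<Longrightarrow> u p \<in> carrier G"
    and c: "c \<in> cochains0 X Y G" and d: "d \<in> cochains0 X Y G"
  shows "cochain_act G P d (cochain_act G P c u) = cochain_act G P (\<lambda>x\<in>topspace X. d x \<otimes>\<^bsub>G\<^esub> c x) u"
proof
  fix p show "cochain_act G P d (cochain_act G P c u) p = cochain_act G P (\<lambda>x\<in>topspace X. d x \<otimes>\<^bsub>G\<^esub> c x) u p"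
  proof (cases "p \<in> P")
    case True
    have e: "p 0 \<in> topspace X" "p 1 \<in> topspace X" using P True by (auto simp: paths_of_def intro: pathin_0 pathin_1)
    have car: "c (p 0) \<in> carrier G" "c (p 1) \<in> carrier G" "d (p 0) \<in> carrier G" "d (p 1) \<in> carrier G"
      using e c0_car c d by auto
    show ?thesis using True e car u[OF True] by (simp add: cochain_act_def G.m_assoc G.inv_mult_group)
  qed (simp add: cochain_act_def)
qed

lemma act_one:
  assumes P: "P \<subseteq> paths_of X" and u: "\<And>p. p \<in> P \<Longrightarrow> u p \<in> carrier G" and ue: "u \<in> extensional P"
  shows "cochain_act G P (\<lambda>x\<in>topspace X. \<one>\<^bsub>G\<^esub>) u = u"
proof
  fix p show "cochain_act G P (\<lambda>x\<in>topspace X. \<one>\<^bsub>G\<^esub>) u p = u p"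
  proof (cases "p \<in> P")
    case True
    have e: "p 0 \<in> topspace X" "p 1 \<in> topspace X" using P True by (auto simp: paths_of_def intro: pathin_0 pathin_1)
    show ?thesis using True e u[OF True] by (simp add: cochain_act_def)
  qed (use ue in \<open>simp add: cochain_act_def extensional_def\<close>)
qed

lemma act_cocycle:
  assumes c: "c \<in> cochains0 X Y G" and u: "u \<in> cocycles1 X Y G"
  shows "cochain_act G (paths_of X) c u \<in> cocycles1 X Y G"
proof -
  have ucar: "u p \<in> carrier G" if "p \<in> paths_of X" for p using u that by (simp add: cocycles1_def)
  have uY: "u p = \<one>\<^bsub>G\<^esub>" if "p \<in> paths_of X" "p ` {0..1} \<subseteq> Y" for p using u that by (simp add: cocycles1_def)
  have uh: "u p = u q" if "p \<in> paths_of X" "q \<in> paths_of X" "phomotopic X p q" for p q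
    using u that unfolding cocycles1_def by blast
  have uj: "u (pjoin p q) = u p \<otimes>\<^bsub>G\<^esub> u q" if "p \<in> paths_of X" "q \<in> paths_of X" "p 1 = q 0" for p q
    using u that unfolding cocycles1_def by blast
  have e: "p 0 \<in> topspace X" "p 1 \<in> topspace X" if "p \<in> paths_of X" for p
    using that by (auto simp: paths_of_def intro: pathin_0 pathin_1)
  have car: "c (p 0) \<in> carrier G" "c (p 1) \<in> carrier G" if "p \<in> paths_of X" for p
    using e[OF that] c0_car c by auto
  show ?thesis
    unfolding cocycles1_def
  proof (intro CollectI conjI ballI impI)
    show "cochain_act G (paths_of X) c u \<in> extensional (paths_of X)" by (simp add: cochain_act_def)
    fix p assume p: "p \<in> paths_of X"
    show "cochain_act G (paths_of X) c u p \<in> carrier G"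
      using p car[OF p] ucar[OF p] by (simp add: cochain_act_def)
    show "cochain_act G (paths_of X) c u p = \<one>\<^bsub>G\<^esub>" if "p ` {0..1} \<subseteq> Y"
    proof -
      have "p 0 \<in> Y" "p 1 \<in> Y" using that by auto
      then show ?thesis using p uY[OF p that] c0_Y[OF c] by (simp add: cochain_act_def)
    qed
    fix q assume q: "q \<in> paths_of X"
    show "cochain_act G (paths_of X) c u p = cochain_act G (paths_of X) c u q" if "phomotopic X p q"
    proof -
      have "q 0 = p 0" "q 1 = p 1"
        using homotopic_with_imp_property[OF that[unfolded phomotopic_def]] by auto
      then show ?thesis using p q uh[OF p q that] by (simp add: cochain_act_def)
    qed
    show "cochain_act G (paths_of X) c u (pjoin p q) =
      cochain_act G (paths_of X) c u p \<otimes>\<^bsub>G\<^esub> cochain_act G (paths_of X) c u q" if pq: "p 1 = q 0"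
    proof -
      have pj: "pjoin p q \<in> paths_of X" using pathin_pjoin p q pq by (auto simp: paths_of_def)
      have canc: "inv\<^bsub>G\<^esub> x \<otimes>\<^bsub>G\<^esub> (x \<otimes>\<^bsub>G\<^esub> z) = z" if "x \<in> carrier G" "z \<in> carrier G" for x z
        using that by (simp add: G.m_assoc[symmetric])
      have "cochain_act G (paths_of X) c u p \<otimes>\<^bsub>G\<^esub> cochain_act G (paths_of X) c u q
          = c (p 0) \<otimes>\<^bsub>G\<^esub> (u p \<otimes>\<^bsub>G\<^esub> (inv\<^bsub>G\<^esub> c (p 1) \<otimes>\<^bsub>G\<^esub> (c (p 1) \<otimes>\<^bsub>G\<^esub> (u q \<otimes>\<^bsub>G\<^esub> inv\<^bsub>G\<^esub> c (q 1)))))"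
        using p q pq car[OF p] car[OF q] ucar[OF p] ucar[OF q] by (simp add: cochain_act_def G.m_assoc)
      also have "\<dots> = c (p 0) \<otimes>\<^bsub>G\<^esub> (u p \<otimes>\<^bsub>G\<^esub> (u q \<otimes>\<^bsub>G\<^esub> inv\<^bsub>G\<^esub> c (q 1)))"
        using car[OF p] car[OF q] ucar[OF q] by (simp add: canc)
      also have "\<dots> = cochain_act G (paths_of X) c u (pjoin p q)"
        using pj uj[OF p q pq] car[OF p] car[OF q] ucar[OF p] ucar[OF q] by (simp add: cochain_act_def G.m_assoc)
      finally show ?thesis by simp
    qed
  qed
qed

lemma orbit_eq:
  assumes c: "c \<in> cochains0 X Y G" and u: "u \<in> cocycles1 X Y G"
  shows "(\<lambda>d. cochain_act G (paths_of X) d (cochain_act G (paths_of X) c u)) ` cochains0 X Y G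
       = (\<lambda>d. cochain_act G (paths_of X) d u) ` cochains0 X Y G"
proof -
  have ucar: "u p \<in> carrier G" if "p \<in> paths_of X" for p using u that by (simp add: cocycles1_def)
  have ac: "cochain_act G (paths_of X) d (cochain_act G (paths_of X) c u)
      = cochain_act G (paths_of X) (\<lambda>x\<in>topspace X. d x \<otimes>\<^bsub>G\<^esub> c x) u" if "d \<in> cochains0 X Y G" for d
    by (rule act_comp[OF order_refl ucar c that])
  show ?thesis
  proof
    show "(\<lambda>d. cochain_act G (paths_of X) d (cochain_act G (paths_of X) c u)) ` cochains0 X Y G
       \<subseteq> (\<lambda>d. cochain_act G (paths_of X) d u) ` cochains0 X Y G"
      using ac cochain_mul[OF c] by auto
    show "(\<lambda>d. cochain_act G (paths_of X) d u) ` cochains0 X Y G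
       \<subseteq> (\<lambda>d. cochain_act G (paths_of X) d (cochain_act G (paths_of X) c u)) ` cochains0 X Y G"
    proof
      fix k assume "k \<in> (\<lambda>d. cochain_act G (paths_of X) d u) ` cochains0 X Y G"
      then obtain d where d: "d \<in> cochains0 X Y G" "k = cochain_act G (paths_of X) d u" by blast
      define d' where "d' = (\<lambda>x\<in>topspace X. d x \<otimes>\<^bsub>G\<^esub> (\<lambda>x\<in>topspace X. inv\<^bsub>G\<^esub> (c x)) x)"
      have d': "d' \<in> cochains0 X Y G" unfolding d'_def by (rule cochain_mul[OF cochain_inv[OF c] d(1)])
      have "(\<lambda>x\<in>topspace X. d' x \<otimes>\<^bsub>G\<^esub> c x) = d"
      proof
        fix x show "(\<lambda>x\<in>topspace X. d' x \<otimes>\<^bsub>G\<^esub> c x) x = d x"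
        proof (cases "x \<in> topspace X")
          case True then show ?thesis using c0_car[OF c True] c0_car[OF d(1) True]
            by (simp add: d'_def G.m_assoc)
        qed (simp add: c0_ext[OF d(1)])
      qed
      then have "k = cochain_act G (paths_of X) d' (cochain_act G (paths_of X) c u)"
        using ac[OF d'] d(2) by simp
      then show "k \<in> (\<lambda>d. cochain_act G (paths_of X) d (cochain_act G (paths_of X) c u)) ` cochains0 X Y G"
        using d' by blast
    qed
  qed
qed

end

theorem theorem3p1:
  fixes X :: "'a topology" and Y :: "'a set" and G :: "('g, 'b) monoid_scheme"
    and \<U> :: "'a set set"
  assumes "path_connected_space X"
    and "Y \<subseteq> topspace X"
    and "group G"
    and "\<forall>U\<in>\<U>. openin X U"
    and "\<Union>\<U> = topspace X"
  shows "bij_betw (restrict_short X \<U>) (cocycles1 X Y G) (short_cocycles1 X \<U> Y G)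
       \<and> bij_betw (\<lambda>K. restrict_short X \<U> ` K) (H1 X Y G) (short_H1 X \<U> Y G)"
proof -
  interpret G: group G by (rule assms(3))
  have S0: "SC0 X \<U>" using assms(4,5) by unfold_locales auto
  define r :: "((real \<Rightarrow> 'a) \<Rightarrow> 'g) \<Rightarrow> (real \<Rightarrow> 'a) \<Rightarrow> 'g" where "r = restrict_short X \<U>"
  define Z where "Z = cocycles1 X Y G"
  define ZS where "ZS = short_cocycles1 X \<U> Y G"
  define C0 where "C0 = cochains0 X Y G"
  have r: "r u = restrict u (short_paths X \<U>)" for u by (simp add: r_def restrict_short_def)
  have rZ: "r u \<in> ZS" if "u \<in> Z" for u using restrict_cocycle that r by (auto simp: Z_def ZS_def)
  have SCw: "SC X \<U> Y G w" if "w \<in> ZS" for w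
    using S0 assms(3) that unfolding SC_def SC_axioms_def ZS_def by auto
  have inj: "inj_on r Z"
  proof (rule inj_onI)
    fix u v assume u: "u \<in> Z" and v: "v \<in> Z" and e: "r u = r v"
    interpret W: SC X \<U> Y G "r u" by (rule SCw[OF rZ[OF u]])
    have "u = W.wext" by (rule W.cocycle_eq_wext) (use u in \<open>simp_all add: r Z_def\<close>)
    moreover have "v = W.wext" by (rule W.cocycle_eq_wext) (use v e in \<open>simp_all add: r Z_def\<close>)
    ultimately show "u = v" by simp
  qed
  have img: "r ` Z = ZS"
  proof
    show "r ` Z \<subseteq> ZS" using rZ by auto
    show "ZS \<subseteq> r ` Z"
    proof
      fix w assume w: "w \<in> ZS"
      interpret W: SC X \<U> Y G w by (rule SCw[OF w])
      have "r W.wext = w" using W.restrict_wext by (simp add: r)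
      then show "w \<in> r ` Z" using W.wext_cocycle unfolding Z_def by (metis image_eqI)
    qed
  qed
  have bij1: "bij_betw r Z ZS" using inj img by (simp add: bij_betw_def)
  define Orb where "Orb u = (\<lambda>c. cochain_act G (paths_of X) c u) ` C0" for u
  define OrbS where "OrbS w = (\<lambda>c. cochain_act G (short_paths X \<U>) c w) ` C0" for w
  have H1e: "H1 X Y G = Orb ` Z" unfolding H1_def Orb_def Z_def C0_def by blast
  have sH1e: "short_H1 X \<U> Y G = OrbS ` ZS" unfolding short_H1_def OrbS_def ZS_def C0_def by blast
  have rO: "r ` Orb u = OrbS (r u)" for u
  proof -
    have "r ` Orb u = (\<lambda>c. r (cochain_act G (paths_of X) c u)) ` C0" unfolding Orb_def by (simp add: image_image)
    also have "\<dots> = OrbS (r u)" unfolding OrbS_def r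
      by (intro image_cong refl act_restrict[OF short_paths_sub])
    finally show ?thesis .
  qed
  have uO: "u \<in> Orb u" if "u \<in> Z" for u
  proof -
    have "cochain_act G (paths_of X) (\<lambda>x\<in>topspace X. \<one>\<^bsub>G\<^esub>) u = u"
      by (rule act_one[OF assms(3,2) order_refl]) (use that in \<open>auto simp: Z_def cocycles1_def\<close>)
    then show ?thesis using cochain_one[OF assms(3,2)] unfolding Orb_def C0_def by (metis image_eqI)
  qed
  have inj2: "inj_on (\<lambda>K. r ` K) (H1 X Y G)"
  proof (rule inj_onI)
    fix K1 K2 assume K1: "K1 \<in> H1 X Y G" and K2: "K2 \<in> H1 X Y G" and e: "r ` K1 = r ` K2"
    obtain u1 where u1: "u1 \<in> Z" "K1 = Orb u1" using K1 H1e by blast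
    obtain u2 where u2: "u2 \<in> Z" "K2 = Orb u2" using K2 H1e by blast
    have "r u1 \<in> r ` Orb u2" using uO[OF u1(1)] e u1(2) u2(2) by blast
    then obtain c where c: "c \<in> C0" "r u1 = r (cochain_act G (paths_of X) c u2)" unfolding Orb_def by blast
    have ac: "cochain_act G (paths_of X) c u2 \<in> Z"
      using act_cocycle[OF assms(3,2)] c(1) u2(1) by (simp add: Z_def C0_def)
    have "u1 = cochain_act G (paths_of X) c u2" using inj_onD[OF inj c(2) u1(1) ac] .
    then have "Orb u1 = Orb u2" unfolding Orb_def C0_def
      using orbit_eq[OF assms(3,2)] c(1) u2(1) by (simp add: Z_def C0_def)
    then show "K1 = K2" using u1 u2 by simp
  qed
  have img2: "(\<lambda>K. r ` K) ` H1 X Y G = short_H1 X \<U> Y G"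
  proof -
    have "(\<lambda>K. r ` K) ` H1 X Y G = (\<lambda>u. OrbS (r u)) ` Z" unfolding H1e image_image rO ..
    also have "\<dots> = OrbS ` (r ` Z)" by (simp add: image_image)
    also have "\<dots> = short_H1 X \<U> Y G" using img sH1e by simp
    finally show ?thesis .
  qed
  show ?thesis using bij1 inj2 img2 unfolding bij_betw_def r_def Z_def ZS_def by simp
qed

end
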